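(* (1) There exists $C>0$ such that for all $f\in L^{2}(\mathbb{R})$ with $xf\in L^{2}(\mathbb{R})$ and all $t>0$, \[ \Big\|e^{it\partial_{x}^{2}}f(x)-\frac{e^{i\frac{x^{2}}{4t}}}{(4i\pi t)^{1/2}}\widehat{f}\Big(\frac{x}{2t}\Big)\Big\|_{L^{\infty}_{x}(\mathbb{R})}\leq Ct^{-\frac34}\|xf\|_{L^{2}_{x}(\mathbb{R})}. \] (2) Let $U$ be a function of $t$ with values in functions on $\mathbb{R}\times\mathbb{T}^d$ and let $F(t)=e^{-it\Delta}U(t)$ be its profile. Then for all $T\geq1$ and $t\in[1,T]$, \[ t^{\frac12}\|U(t)\|_{L^{\infty}_{x}h^{s}_{y}}\lesssim\|F(t)\|_{Z}+t^{-\frac14}\|F(t)\|_{S}\lesssim\|F\|_{X_{T}} . \]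
   Context: Here $\widehat{f}$ is a suitably normalized Fourier transform on $\mathbb{R}$. $\mathrm{A}$ is a real symmetric positive definite $d\times d$ matrix, $\lambda_n^2=n^\intercal\mathrm{A}n$; $\Delta=\partial_{x}^{2}+\operatorname{div}(\mathrm{A}\nabla_{y})$ on $\mathbb{R}\times\mathbb{T}^d$, $\mathbb{T}^d=\mathbb{R}^d/(2\pi\mathbb{Z})^d$. Fixed parameters: $s>\frac{d}{2}$ (in the paper $s>\frac d2+\frac{4\tau}{c(d)}$), $\sigma>0$, and $\delta>0$ sufficiently small. Clusters: $(\mathscr{C}_{\alpha})_{\alpha\geq0}$ is a fixed partition of $\mathbb{Z}^{d}$ with $0\in\mathscr{C}_0$, $\mathscr{C}_0$ bounded, and $\max_{\mathscr{C}_{\alpha}}|n|\leq2\min_{\mathscr{C}_{\alpha}}|n|$ for $\alpha\geq1$ (the Berti–Maspero cluster decomposition); $K_0=1$, $K_{\alpha}=\min_{n\in\mathscr{C}_{\alpha}}|n|$ for $\alpha\ge1$. For $u=\sum u_n e^{in\cdot y}$ on $\mathbb{T}^d$: $\pi_{\alpha}u=\sum_{n\in\mathscr{C}_{\alpha}}u_{n}e^{in\cdot y}$, $\|u\|_{\ell^2}=(\sum|u_n|^2)^{1/2}$, $\|u\|_{h^{s}}=(\sum_{\alpha}K_{\alpha}^{2s}\|\pi_{\alpha}u\|_{\ell^{2}}^{2})^{1/2}$. For $F$ on $\mathbb{R}\times\mathbb{T}^{d}$: $F_{n}(x)=(2\pi)^{-d}\int e^{-in\cdot y}F(x,y)dy$,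 $\widehat{F}_{n}(\xi)=(2\pi)^{-(d+1)}\int e^{-i(\xi x+n\cdot y)}F\,dxdy$, $\widehat F(\xi,y)=\sum_n\widehat F_n(\xi)e^{in\cdot y}$. $\|F\|_{L^{\infty}_{x}h^{s}_{y}}=\sup_x\|F(x,\cdot)\|_{h^s}$, $\|F\|_{L^{2}_{x}h^{s}_{y}}=\|\,\|F(x,\cdot)\|_{h^{s}}\|_{L^{2}_{x}}$, $\|F\|_{H^{s}_{x}\ell^{2}_{y}}=(\sum_{n}\|F_{n}\|_{H^{s}(\mathbb{R})}^{2})^{1/2}$, $\|F\|_{H^{s}_{x,y}}=(\|F\|_{L^{2}_{x}h^{s}_{y}}^{2}+\|F\|_{H^{s}_{x}\ell^{2}_{y}}^{2})^{1/2}$. $\|F\|_{S}=\|(1-\partial_{x}^{2})^{\sigma/2}F\|_{H^{s}_{x,y}}+\|xF\|_{L^{2}_{x}h^{s}_{y}}$; $\|F\|_{Z}=\sup_{\xi\in\mathbb{R}}\|\widehat{F}(\xi,\cdot)\|_{h^{s}}$; for time-dependent $F$, $\|F\|_{X_{T}}=\sup_{0\leq t\leq T}\big(\|F(t)\|_{Z}+\langle t\rangle^{-\delta}\|F(t)\|_{S}+\langle t\rangle^{1-\delta}\|\partial_{t}F(t)\|_{S}\big)$, $\langle t\rangle=(1+t^2)^{1/2}$. Implicit constants in $\lesssim$ depend only on $d,\mathrm{A},s,\sigma,\delta$. *)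

theory Defs
  imports "HOL-Analysis.Analysis"
begin

definition ivec :: "int^'d \<Rightarrow> real^'d" where
  "ivec n = (\<chi> i. real_of_int (n $ i))"

definition vnorm :: "int^'d \<Rightarrow> real" where
  "vnorm n = norm (ivec n)"

definition lam2 :: "real^'d^'d \<Rightarrow> int^'d \<Rightarrow> real" where
  "lam2 A n = ivec n \<bullet> (A *v ivec n)"

text \<open>Berti--Maspero type cluster decomposition (C_alpha), alpha >= 0, of Z^d.\<close>

definition cluster_partition :: "(nat \<Rightarrow> (int^'d) set) \<Rightarrow> bool" where
  "cluster_partition Cl \<longleftrightarrow>
     (\<forall>\<alpha> \<beta>. \<alpha> \<noteq> \<beta> \<longrightarrow> Cl \<alpha> \<inter> Cl \<beta> = {}) \<and> (\<Union>\<alpha>. Cl \<alpha>) = UNIV \<and>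
     (\<forall>\<alpha>. Cl \<alpha> \<noteq> {}) \<and> 0 \<in> Cl 0 \<and> bounded (ivec ` Cl 0) \<and>
     (\<forall>\<alpha>\<ge>1. \<forall>m\<in>Cl \<alpha>. \<forall>n\<in>Cl \<alpha>. vnorm m \<le> 2 * vnorm n)"

definition Kc :: "(nat \<Rightarrow> (int^'d) set) \<Rightarrow> nat \<Rightarrow> real" where
  "Kc Cl \<alpha> = (if \<alpha> = 0 then 1 else Inf (vnorm ` Cl \<alpha>))"

text \<open>Square root on [0,\<infinity>]; all norms below are [0,\<infinity>]-valued (so that a
  norm which is infinite is infinite rather than a junk real value).\<close>

definition esqrt :: "ennreal \<Rightarrow> ennreal" where
  "esqrt v = (if v = \<infinity> then \<infinity> else ennreal (sqrt (enn2real v)))"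

text \<open>h^s norm of a function on T^d given by its Fourier coefficients u_n.\<close>

definition hs_sq :: "(nat \<Rightarrow> (int^'d) set) \<Rightarrow> real \<Rightarrow> (int^'d \<Rightarrow> complex) \<Rightarrow> ennreal" where
  "hs_sq Cl s u = (\<Sum>\<alpha>. ennreal (Kc Cl \<alpha> powr (2 * s)) * (\<integral>\<^sup>+ n. ennreal ((cmod (u n))\<^sup>2) \<partial>count_space (Cl \<alpha>)))"

definition hs_norm :: "(nat \<Rightarrow> (int^'d) set) \<Rightarrow> real \<Rightarrow> (int^'d \<Rightarrow> complex) \<Rightarrow> ennreal" where
  "hs_norm Cl s u = esqrt (hs_sq Cl s u)"

text \<open>Fourier transform on R: unnormalized (as needed in part (1)) and the normalized
  one of the context, hat F_n(xi) = (2 pi)^(-1) int e^(-i xi x) F_n(x) dx.\<close>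

definition fourier :: "(real \<Rightarrow> complex) \<Rightarrow> real \<Rightarrow> complex" where
  "fourier f \<xi> = (\<integral>x. cis (- (\<xi> * x)) * f x \<partial>lborel)"

definition fourierN :: "(real \<Rightarrow> complex) \<Rightarrow> real \<Rightarrow> complex" where
  "fourierN f \<xi> = fourier f \<xi> / complex_of_real (2 * pi)"

text \<open>Free Schroedinger group e^{it d_x^2} on R (t > 0), via its kernel
  (4 i pi t)^(-1/2) e^{i (x-y)^2/(4t)}, principal branch of the square root.\<close>

definition schr :: "real \<Rightarrow> (real \<Rightarrow> complex) \<Rightarrow> real \<Rightarrow> complex" where
  "schr t f x = (\<integral>y. cis ((x - y)\<^sup>2 / (4 * t)) * f y \<partial>lborel)
                 / csqrt (4 * \<i> * complex_of_real pi * complex_of_real t)"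

text \<open>Functions G on R x T^d are represented by their Fourier coefficients:
  G x n = G_n(x).  e^{it Delta} acts on the mode n as e^{-it lambda_n^2} e^{it d_x^2}.\<close>

definition evol :: "real^'d^'d \<Rightarrow> real \<Rightarrow> (real \<Rightarrow> int^'d \<Rightarrow> complex) \<Rightarrow> real \<Rightarrow> int^'d \<Rightarrow> complex" where
  "evol A t G x n = cis (- (t * lam2 A n)) * schr t (\<lambda>y. G y n) x"

definition Linf_hs :: "(nat \<Rightarrow> (int^'d) set) \<Rightarrow> real \<Rightarrow> (real \<Rightarrow> int^'d \<Rightarrow> complex) \<Rightarrow> ennreal" where
  "Linf_hs Cl s G = (SUP x. hs_norm Cl s (G x))"

definition L2hs :: "(nat \<Rightarrow> (int^'d) set) \<Rightarrow> real \<Rightarrow> (real \<Rightarrow> int^'d \<Rightarrow> complex) \<Rightarrow> ennreal" where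
  "L2hs Cl s G = esqrt (\<integral>\<^sup>+ x. hs_sq Cl s (G x) \<partial>lborel)"

text \<open>Every mode in L^1 \<inter> L^2 (R).  If this fails then the S norm is infinite
  (either some G_n is not in L^2, or G_n is in L^2 but not L^1, whence x G_n is not in L^2).\<close>

definition admissible :: "(real \<Rightarrow> 'n \<Rightarrow> complex) \<Rightarrow> bool" where
  "admissible G \<longleftrightarrow> (\<forall>n. integrable lborel (\<lambda>x. G x n) \<and>
                           integrable lborel (\<lambda>x. (cmod (G x n))\<^sup>2))"

text \<open>Squares of  ||(1 - d_x^2)^(sigma/2) G||_{L^2_x h^s_y}  and
  ||(1 - d_x^2)^(sigma/2) G||_{H^s_x l^2_y}, computed on the Fourier side
  (Plancherel: ||g||_{L^2}^2 = 2 pi ||hat g||_{L^2}^2 for the normalized transform).\<close>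

definition L2hs_J_sq :: "(nat \<Rightarrow> (int^'d) set) \<Rightarrow> real \<Rightarrow> real \<Rightarrow> (real \<Rightarrow> int^'d \<Rightarrow> complex) \<Rightarrow> ennreal" where
  "L2hs_J_sq Cl s \<sigma> G = ennreal (2 * pi) *
     (\<integral>\<^sup>+ \<xi>. ennreal ((1 + \<xi>\<^sup>2) powr \<sigma>) * hs_sq Cl s (\<lambda>n. fourierN (\<lambda>x. G x n) \<xi>) \<partial>lborel)"

definition Hsl2_J_sq :: "real \<Rightarrow> real \<Rightarrow> (real \<Rightarrow> int^'d \<Rightarrow> complex) \<Rightarrow> ennreal" where
  "Hsl2_J_sq s \<sigma> G = (\<integral>\<^sup>+ n. ennreal (2 * pi) *
     (\<integral>\<^sup>+ \<xi>. ennreal ((1 + \<xi>\<^sup>2) powr (\<sigma> + s)) * ennreal ((cmod (fourierN (\<lambda>x. G x n) \<xi>))\<^sup>2) \<partial>lborel)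
     \<partial>count_space UNIV)"

definition S_norm :: "(nat \<Rightarrow> (int^'d) set) \<Rightarrow> real \<Rightarrow> real \<Rightarrow> (real \<Rightarrow> int^'d \<Rightarrow> complex) \<Rightarrow> ennreal" where
  "S_norm Cl s \<sigma> G = (if admissible G then
      esqrt (L2hs_J_sq Cl s \<sigma> G + Hsl2_J_sq s \<sigma> G)
      + L2hs Cl s (\<lambda>x n. complex_of_real x * G x n)
    else \<infinity>)"

definition Z_norm :: "(nat \<Rightarrow> (int^'d) set) \<Rightarrow> real \<Rightarrow> (real \<Rightarrow> int^'d \<Rightarrow> complex) \<Rightarrow> ennreal" where
  "Z_norm Cl s G = (SUP \<xi>. hs_norm Cl s (\<lambda>n. fourierN (\<lambda>x. G x n) \<xi>))"

definition jbr :: "real \<Rightarrow> real" where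
  "jbr t = sqrt (1 + t\<^sup>2)"

definition dt_S_norm :: "(nat \<Rightarrow> (int^'d) set) \<Rightarrow> real \<Rightarrow> real \<Rightarrow> real \<Rightarrow> (real \<Rightarrow> real \<Rightarrow> int^'d \<Rightarrow> complex) \<Rightarrow> real \<Rightarrow> ennreal" where
  "dt_S_norm Cl s \<sigma> T F t =
     (if \<forall>x n. (\<lambda>\<tau>. F \<tau> x n) differentiable (at t within {0..T})
      then S_norm Cl s \<sigma> (\<lambda>x n. vector_derivative (\<lambda>\<tau>. F \<tau> x n) (at t within {0..T}))
      else \<infinity>)"

definition X_norm :: "(nat \<Rightarrow> (int^'d) set) \<Rightarrow> real \<Rightarrow> real \<Rightarrow> real \<Rightarrow> real \<Rightarrow> (real \<Rightarrow> real \<Rightarrow> int^'d \<Rightarrow> complex) \<Rightarrow> ennreal" where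
  "X_norm Cl s \<sigma> \<delta> T F = (SUP t\<in>{0..T}.
      Z_norm Cl s (F t) + ennreal (jbr t powr (- \<delta>)) * S_norm Cl s \<sigma> (F t)
      + ennreal (jbr t powr (1 - \<delta>)) * dt_S_norm Cl s \<sigma> T F t)"

end

theory Submission
  imports Defs "HOL-Probability.Sinc_Integral"
begin

lemma inv1sq: "integrable lborel (\<lambda>x::real. inverse (1 + x^2))" "(\<integral>x. inverse (1 + x^2) \<partial>lborel) = pi"
proof -
  have e: "einterval (-\<infinity>) \<infinity> = (UNIV::real set)" by (auto simp: einterval_def)
  show "integrable lborel (\<lambda>x::real. inverse (1 + x^2))"
    using integrable_inverse_1_plus_square by (simp add: e set_integrable_def)
  show "(\<integral>x. inverse (1 + x^2) \<partial>lborel) = pi"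
    using LBINT_inverse_1_plus_square by (simp add: e interval_lebesgue_integral_def set_lebesgue_integral_def)
qed

lemma invasq:
  fixes t :: real assumes t: "t > 0"
  shows "integrable lborel (\<lambda>y::real. 1 / (4*t + y^2))" "(\<integral>y. 1 / (4*t + y^2) \<partial>lborel) = pi / (2 * sqrt t)"
proof -
  define c where "c = 2 * sqrt t"
  have c: "c > 0" "c^2 = 4*t" using t by (auto simp: c_def power_mult_distrib)
  have eq: "(\<lambda>x. 1 / (4*t + (0 + c*x)^2)) = (\<lambda>x. (1/(4*t)) * inverse (1 + x^2))"
    using t c by (auto simp: fun_eq_iff field_simps power_mult_distrib)
  have i1: "integrable lborel (\<lambda>x. 1 / (4*t + (0 + c*x)^2))"
    unfolding eq using inv1sq(1) by simp
  show "integrable lborel (\<lambda>y::real. 1 / (4*t + y^2))"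
    using i1 lborel_integrable_real_affine_iff[of c "\<lambda>y. 1 / (4*t + y^2)" 0] c by simp
  have "(\<integral>y. 1 / (4*t + y^2) \<partial>lborel) = \<bar>c\<bar> *\<^sub>R (\<integral>x. 1 / (4*t + (0 + c*x)^2) \<partial>lborel)"
    using lborel_integral_real_affine[of c "\<lambda>y. 1 / (4*t + y^2)" 0] c by simp
  also have "\<dots> = c * (1/(4*t)) * pi" unfolding eq using c inv1sq(2) by simp
  also have "\<dots> = pi / (2 * sqrt t)" using t by (simp add: c_def field_simps)
  finally show "(\<integral>y. 1 / (4*t + y^2) \<partial>lborel) = pi / (2 * sqrt t)" .
qed

lemma cis_m1: "cmod (cis u - 1) \<le> \<bar>u\<bar>"
proof -
  have "(cmod (cis u - 1))^2 = (cos u - 1)^2 + (sin u)^2"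
    by (simp add: cmod_power2)
  also have "\<dots> = 4 * (sin (u/2))^2"
    using cos_double_sin[of "u/2"] sin_cos_squared_add[of u] by (simp add: power2_eq_square algebra_simps)
  also have "\<dots> \<le> 4 * (u/2)^2"
  proof -
    have "(sin (u/2))^2 \<le> (u/2)^2" using abs_sin_x_le_abs_x[of "u/2"] by (simp only: abs_le_square_iff[symmetric])
    thus ?thesis by simp
  qed
  also have "\<dots> = u^2" by (simp add: power2_eq_square)
  finally have "\<bar>cmod (cis u - 1)\<bar> \<le> \<bar>u\<bar>" by (simp only: abs_le_square_iff)
  thus ?thesis by simp
qed

lemma cis_m1': "cmod (cis u - 1) \<le> 2"
proof -
  have "cmod (cis u - 1) \<le> cmod (cis u) + cmod 1" by (rule norm_triangle_ineq4)
  thus ?thesis by simp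
qed

lemma eps_lemma:
  fixes X B J :: real assumes B: "B > 0" and J: "J \<ge> 0"
    and h: "\<And>e. e > 0 \<Longrightarrow> X \<le> e * B / 2 + J / (2 * e)"
  shows "X \<le> sqrt (J * B)"
proof (cases "J = 0")
  case True
  show ?thesis
  proof (rule ccontr)
    assume "\<not> ?thesis" hence X: "X > 0" using True by simp
    have "X \<le> (X / B) * B / 2" using h[of "X/B"] X B True by simp
    thus False using X B by simp
  qed
next
  case False
  hence Jp: "J > 0" using J by simp
  define e where "e = sqrt (J / B)"
  have e: "e > 0" using Jp B by (simp add: e_def)
  have "X \<le> e * B / 2 + J / (2 * e)" using h e by simp
  also have "\<dots> = sqrt (J * B)"
  proof -
    have "e * B = sqrt (J / B) * sqrt (B * B)" using B by (simp add: e_def)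
    also have "\<dots> = sqrt (J * B)" unfolding real_sqrt_mult[symmetric] using B by (simp add: field_simps power2_eq_square)
    finally have 1: "e * B = sqrt (J * B)" .
    have "J / e = sqrt (J * J) / sqrt (J / B)" using Jp by (simp add: e_def)
    also have "\<dots> = sqrt (J * B)" unfolding real_sqrt_divide[symmetric] using B Jp by (simp add: field_simps power2_eq_square)
    finally have 2: "J / e = sqrt (J * B)" .
    show ?thesis using 1 2 e by (simp add: field_simps)
  qed
  finally show ?thesis .
qed


lemma min_bound:
  fixes u :: real assumes "u \<ge> 0" shows "min 2 u \<le> 3 * u / (1 + u)"
  using assms by (auto simp: field_simps min_def intro: mult_left_mono)

lemma part1:
  fixes f :: "real \<Rightarrow> complex" and t x :: real
  assumes t: "t > 0" and fm: "f \<in> borel_measurable lborel"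
    and fi: "integrable lborel (\<lambda>y. (y * cmod (f y))\<^sup>2)"
  shows "cmod (schr t f x - cis (x\<^sup>2 / (4 * t)) / csqrt (4 * \<i> * complex_of_real pi * complex_of_real t)
                        * fourier f (x / (2 * t)))
             \<le> 2 * t powr (- 3 / 4) * sqrt (\<integral>y. (y * cmod (f y))\<^sup>2 \<partial>lborel)"
proof -
  define c where "c = csqrt (4 * \<i> * complex_of_real pi * complex_of_real t)"
  define J where "J = (\<integral>y. (y * cmod (f y))\<^sup>2 \<partial>lborel)"
  have J0: "J \<ge> 0" unfolding J_def by (rule integral_nonneg_AE) auto
  have cn: "cmod c = sqrt (4 * pi * t)" using t
    by (simp add: c_def norm_mult)
  have cpos: "cmod c > 0" using t cn by simp
  have RHS0: "0 \<le> 2 * t powr (- 3 / 4) * sqrt J" using J0 by simp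
  define k where "k = (\<lambda>y. cis ((x - y)\<^sup>2 / (4 * t)) * f y)"
  define l where "l = (\<lambda>y. cis (- (x / (2 * t) * y)) * f y)"
  have c1: "(\<lambda>y. cis ((x - y)\<^sup>2 / (4 * t))) \<in> borel_measurable lborel"
    unfolding measurable_lborel2 by (intro borel_measurable_continuous_onI continuous_intros) (use t in auto)
  have c2: "(\<lambda>y. cis (- (x / (2 * t) * y))) \<in> borel_measurable lborel"
    unfolding measurable_lborel2 by (intro borel_measurable_continuous_onI continuous_intros)
  have km: "k \<in> borel_measurable lborel" unfolding k_def using fm c1 by measurable
  have lm: "l \<in> borel_measurable lborel" unfolding l_def using fm c2 by measurable
  have nk: "\<And>y. norm (k y) = norm (f y)" "\<And>y. norm (l y) = norm (f y)"
    by (simp_all add: k_def l_def norm_mult)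
  have ik: "integrable lborel k \<longleftrightarrow> integrable lborel f"
    using integrable_norm_iff[OF km] integrable_norm_iff[OF fm] nk by simp
  have il: "integrable lborel l \<longleftrightarrow> integrable lborel f"
    using integrable_norm_iff[OF lm] integrable_norm_iff[OF fm] nk by simp
  have schr_eq: "schr t f x = integral\<^sup>L lborel k / c" by (simp add: schr_def k_def c_def)
  have four_eq: "fourier f (x / (2 * t)) = integral\<^sup>L lborel l" by (simp add: fourier_def l_def)
  show ?thesis
  proof (cases "integrable lborel f")
    case False
    hence "integral\<^sup>L lborel k = 0" "integral\<^sup>L lborel l = 0"
      using ik il not_integrable_integral_eq by auto
    thus ?thesis unfolding c_def[symmetric] J_def[symmetric] schr_eq four_eq using RHS0 by simp
  next
    case True
    hence ki: "integrable lborel k" and li: "integrable lborel l" using ik il by auto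
    define h where "h = (\<lambda>y. k y - cis (x\<^sup>2 / (4 * t)) * l y)"
    have hi: "integrable lborel h" unfolding h_def using ki li by simp
    have diff: "schr t f x - cis (x\<^sup>2 / (4 * t)) / c * fourier f (x / (2 * t)) = integral\<^sup>L lborel h / c"
      unfolding schr_eq four_eq h_def using ki li by (simp add: diff_divide_distrib mult.commute)
    have nh: "norm (h y) = cmod (cis (y\<^sup>2 / (4 * t)) - 1) * cmod (f y)" for y
    proof -
      have "(x - y)\<^sup>2 / (4 * t) = x\<^sup>2 / (4 * t) + - (x / (2 * t) * y) + y\<^sup>2 / (4 * t)"
        using t by (simp add: field_simps power2_eq_square)
      hence "cis ((x - y)\<^sup>2 / (4 * t)) = cis (x\<^sup>2 / (4 * t)) * cis (- (x / (2 * t) * y)) * cis (y\<^sup>2 / (4 * t))"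
        by (simp add: cis_mult)
      hence "h y = cis (x\<^sup>2 / (4 * t)) * cis (- (x / (2 * t) * y)) * ((cis (y\<^sup>2 / (4 * t)) - 1) * f y)"
        unfolding h_def k_def l_def by (simp add: algebra_simps)
      thus ?thesis by (simp add: norm_mult)
    qed
    define G where "G = (\<lambda>y::real. 3 * \<bar>y\<bar> / (4 * t + y\<^sup>2))"
    have Gpos: "G y \<ge> 0" for y using t by (simp add: G_def)
    have den: "4 * t + y\<^sup>2 > 0" for y using t by (simp add: add_pos_nonneg)
    have hG: "norm (h y) \<le> G y * (\<bar>y\<bar> * cmod (f y))" for y
    proof -
      define u where "u = y\<^sup>2 / (4 * t)"
      have u0: "u \<ge> 0" using t by (simp add: u_def)
      have "cmod (cis u - 1) \<le> min 2 u" using cis_m1[of u] cis_m1'[of u] u0 by simp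
      also have "\<dots> \<le> 3 * u / (1 + u)" by (rule min_bound[OF u0])
      also have "\<dots> = G y * \<bar>y\<bar>"
        using t den[of y] by (simp add: u_def G_def field_simps power2_eq_square)
      finally have "cmod (cis u - 1) * cmod (f y) \<le> G y * \<bar>y\<bar> * cmod (f y)"
        by (simp add: mult_right_mono)
      thus ?thesis unfolding nh u_def by (simp add: mult.assoc)
    qed
    have Gm: "G \<in> borel_measurable lborel" unfolding G_def by measurable
    have G2b: "(G y)\<^sup>2 \<le> 9 * (1 / (4 * t + y\<^sup>2))" for y
    proof -
      have "(G y)\<^sup>2 = 9 * y\<^sup>2 / (4 * t + y\<^sup>2)\<^sup>2" by (simp add: G_def power_divide power_mult_distrib)
      also have "\<dots> \<le> 9 * (4 * t + y\<^sup>2) / (4 * t + y\<^sup>2)\<^sup>2"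
        using t den[of y] by (intro divide_right_mono) auto
      also have "\<dots> = 9 * (1 / (4 * t + y\<^sup>2))"
      proof -
        have gen: "9 * D / D\<^sup>2 = 9 * (1 / D)" if "D \<noteq> 0" for D :: real
          using that by (simp add: power2_eq_square)
        show ?thesis using gen[of "4 * t + y\<^sup>2"] den[of y] by simp
      qed
      finally show ?thesis .
    qed
    have i9: "integrable lborel (\<lambda>y. 9 * (1 / (4 * t + y\<^sup>2)))"
      using invasq(1)[OF t] by (rule integrable_mult_right)
    have nG: "norm ((G y)\<^sup>2) \<le> norm (9 * (1 / (4 * t + y\<^sup>2)))" for y
    proof -
      have "norm (9 * (1 / (4 * t + y\<^sup>2))) = 9 * (1 / (4 * t + y\<^sup>2))" using den[of y] by simp
      thus ?thesis using G2b[of y] by simp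
    qed
    have G2i: "integrable lborel (\<lambda>y. (G y)\<^sup>2)"
      by (rule Bochner_Integration.integrable_bound[OF i9]) (use Gm nG in auto)
    have G2I: "(\<integral>y. (G y)\<^sup>2 \<partial>lborel) \<le> 9 * pi / (2 * sqrt t)"
    proof -
      have "(\<integral>y. (G y)\<^sup>2 \<partial>lborel) \<le> (\<integral>y. 9 * (1 / (4 * t + y\<^sup>2)) \<partial>lborel)"
        by (rule integral_mono) (use G2i i9 G2b in auto)
      also have "\<dots> = 9 * pi / (2 * sqrt t)" using invasq(2)[OF t] integral_mult_right_zero[of lborel 9 "\<lambda>y. 1 / (4 * t + y\<^sup>2)"] by (simp only:)
      finally show ?thesis .
    qed
    define P where "P = (\<lambda>y. G y * (\<bar>y\<bar> * cmod (f y)))"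
    have Pb: "\<And>e. e > 0 \<Longrightarrow> P y \<le> e / 2 * (G y)\<^sup>2 + 1 / (2 * e) * (y * cmod (f y))\<^sup>2" for y
    proof -
      fix e :: real assume e: "e > 0"
      have "0 \<le> (e * G y - \<bar>y\<bar> * cmod (f y))\<^sup>2" by simp
      hence "2 * e * P y \<le> e\<^sup>2 * (G y)\<^sup>2 + (y * cmod (f y))\<^sup>2"
        by (simp add: P_def power2_eq_square algebra_simps abs_mult_self_eq)
      thus "P y \<le> e / 2 * (G y)\<^sup>2 + 1 / (2 * e) * (y * cmod (f y))\<^sup>2"
        using e by (simp add: field_simps power2_eq_square)
    qed
    have Pm: "P \<in> borel_measurable lborel" unfolding P_def using Gm fm by measurable
    have P0: "P y \<ge> 0" for y using Gpos by (simp add: P_def)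
    have Pi: "integrable lborel P"
      by (rule Bochner_Integration.integrable_bound[where f="\<lambda>y. 1 / 2 * (G y)\<^sup>2 + 1 / (2 * 1) * (y * cmod (f y))\<^sup>2"])
         (use G2i fi Pm Pb[of 1] P0 in auto)
    have Pe: "(\<integral>y. P y \<partial>lborel) \<le> e * (9 * pi / (2 * sqrt t)) / 2 + J / (2 * e)" if e: "e > 0" for e
    proof -
      have "(\<integral>y. P y \<partial>lborel) \<le> (\<integral>y. e / 2 * (G y)\<^sup>2 + 1 / (2 * e) * (y * cmod (f y))\<^sup>2 \<partial>lborel)"
        by (rule integral_mono) (use Pi G2i fi Pb e in auto)
      also have "\<dots> = e / 2 * (\<integral>y. (G y)\<^sup>2 \<partial>lborel) + 1 / (2 * e) * J"
        using G2i fi by (simp add: J_def)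
      also have "\<dots> \<le> e / 2 * (9 * pi / (2 * sqrt t)) + 1 / (2 * e) * J"
        using mult_left_mono[OF G2I, of "e / 2"] e by simp
      finally show ?thesis by simp
    qed
    have PJ: "(\<integral>y. P y \<partial>lborel) \<le> sqrt (J * (9 * pi / (2 * sqrt t)))"
      by (rule eps_lemma) (use t J0 Pe in auto)
    have "norm (integral\<^sup>L lborel h) \<le> (\<integral>y. norm (h y) \<partial>lborel)" by (rule integral_norm_bound)
    also have "\<dots> \<le> (\<integral>y. P y \<partial>lborel)"
      by (rule integral_mono) (use hi Pi hG in \<open>auto simp: P_def\<close>)
    finally have hb: "norm (integral\<^sup>L lborel h) \<le> sqrt (J * (9 * pi / (2 * sqrt t)))" using PJ by simp
    have "cmod (integral\<^sup>L lborel h / c) \<le> sqrt (J * (9 * pi / (2 * sqrt t))) / sqrt (4 * pi * t)"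
      using hb cpos by (simp add: norm_divide cn divide_right_mono)
    also have "\<dots> = sqrt J * sqrt (9 / 8 * (t powr (-3/2)))"
    proof -
      have "t powr (3/2) = t powr (1 + 1/2)" by simp
      also have "\<dots> = t powr 1 * t powr (1/2)" by (rule powr_add)
      also have "\<dots> = t * t powr (1/2)" using t by simp
      finally have "t * t powr (1/2) = t powr (3/2)" by simp
      hence "t powr (-3/2) = 1 / (t * sqrt t)" using t
        by (simp add: powr_minus_divide powr_half_sqrt[symmetric])
      hence e1: "9 * pi / (2 * sqrt t) / (4 * pi * t) = 9 / 8 * (t powr (-3/2))" using t by (simp add: field_simps)
      have "sqrt (J * (9 * pi / (2 * sqrt t))) / sqrt (4 * pi * t) = sqrt (J * (9 * pi / (2 * sqrt t)) / (4 * pi * t))"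
        by (simp only: real_sqrt_divide)
      also have "J * (9 * pi / (2 * sqrt t)) / (4 * pi * t) = J * (9 * pi / (2 * sqrt t) / (4 * pi * t))" by simp
      also have "sqrt (J * (9 * pi / (2 * sqrt t) / (4 * pi * t))) = sqrt J * sqrt (9 / 8 * (t powr (-3/2)))"
        unfolding e1 by (rule real_sqrt_mult)
      finally show ?thesis .
    qed
    also have "\<dots> \<le> sqrt J * (2 * t powr (-3/4))"
    proof (rule mult_left_mono)
      have "sqrt (t powr (-3/2)) = (t powr (-3/2)) powr (1/2)" by (simp add: powr_half_sqrt)
      also have "\<dots> = t powr (-3/4)" by (simp add: powr_powr)
      finally have "sqrt (t powr (-3/2)) = t powr (-3/4)" .
      hence "sqrt (9 / 8 * (t powr (-3/2))) = sqrt (9/8) * t powr (-3/4)" by (simp only: real_sqrt_mult)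
      moreover have "sqrt (9/8::real) \<le> 2" using real_sqrt_le_mono[of "9/8" 4] by (simp add: real_sqrt_four)
      ultimately show "sqrt (9 / 8 * (t powr (-3/2))) \<le> 2 * t powr (-3/4)"
        by (simp add: mult_right_mono)
    qed (simp add: J0)
    finally have fin: "cmod (integral\<^sup>L lborel h / c) \<le> sqrt J * (2 * t powr (-3/4))" .
    show ?thesis unfolding c_def[symmetric] J_def[symmetric] diff using fin by (simp add: mult_ac)
  qed
qed



lemma esqrt_sq: "(esqrt v)\<^sup>2 = v"
proof (cases v rule: ennreal_cases)
  case (real r) thus ?thesis by (simp add: esqrt_def ennreal_power)
next
  case top thus ?thesis by (simp add: esqrt_def power2_eq_square)
qed

lemma esqrt_mono: "v \<le> w \<Longrightarrow> esqrt v \<le> esqrt w"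
proof (cases w rule: ennreal_cases)
  case top thus ?thesis by (simp add: esqrt_def)
next
  case (real r)
  assume vw: "v \<le> w"
  then obtain q where q: "v = ennreal q" "0 \<le> q" "q \<le> r" using real
    by (metis ennreal_cases ennreal_le_iff top.extremum_unique ennreal_neq_top)
  thus ?thesis using real by (simp add: esqrt_def)
qed

lemma esqrt_of_sq: "esqrt (w\<^sup>2) = w"
proof (cases w rule: ennreal_cases)
  case (real r) thus ?thesis by (simp add: esqrt_def ennreal_power)
next
  case top thus ?thesis by (simp add: esqrt_def power2_eq_square)
qed

lemma esqrt_le: "v \<le> w\<^sup>2 \<Longrightarrow> esqrt v \<le> w"
  using esqrt_mono esqrt_of_sq by metis

definition hsq :: "(nat \<Rightarrow> (int^'d) set) \<Rightarrow> real \<Rightarrow> (int^'d \<Rightarrow> ennreal) \<Rightarrow> ennreal" where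
  "hsq Cl s w = (\<Sum>\<alpha>. ennreal (Kc Cl \<alpha> powr (2 * s)) * (\<integral>\<^sup>+ n. w n \<partial>count_space (Cl \<alpha>)))"

lemma hs_sq_hsq: "hs_sq Cl s u = hsq Cl s (\<lambda>n. ennreal ((cmod (u n))\<^sup>2))"
  by (simp add: hs_sq_def hsq_def)

lemma hsq_mono: "(\<And>n. w1 n \<le> w2 n) \<Longrightarrow> hsq Cl s w1 \<le> hsq Cl s w2"
  unfolding hsq_def by (intro suminf_le mult_left_mono nn_integral_mono) auto

lemma hsq_lin: "hsq Cl s (\<lambda>n. a * w1 n + b * w2 n) = a * hsq Cl s w1 + b * hsq Cl s w2"
proof -
  have each: "ennreal (Kc Cl \<alpha> powr (2 * s)) * (\<integral>\<^sup>+ n. a * w1 n + b * w2 n \<partial>count_space (Cl \<alpha>))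
     = a * (ennreal (Kc Cl \<alpha> powr (2 * s)) * (\<integral>\<^sup>+ n. w1 n \<partial>count_space (Cl \<alpha>)))
       + b * (ennreal (Kc Cl \<alpha> powr (2 * s)) * (\<integral>\<^sup>+ n. w2 n \<partial>count_space (Cl \<alpha>)))" for \<alpha>
    by (simp add: nn_integral_add nn_integral_cmult algebra_simps)
  show ?thesis unfolding hsq_def each
    by (subst suminf_add[symmetric]) auto
qed

lemma countable_cl: "countable (S :: (int^'d) set)"
  by (rule countable_subset[OF subset_UNIV]) simp

lemma meas_cs:
  fixes f :: "'i \<Rightarrow> 'a \<Rightarrow> ennreal"
  assumes "countable I" and [measurable]: "\<And>i. i \<in> I \<Longrightarrow> f i \<in> borel_measurable M"
  shows "(\<lambda>x. \<integral>\<^sup>+i. f i x \<partial>count_space I) \<in> borel_measurable M"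
proof cases
  assume "finite I" then show ?thesis
    by (simp add: nn_integral_count_space_finite)
next
  assume "infinite I"
  then have [simp]: "I \<noteq> {}"
    by auto
  note * = bij_betw_from_nat_into[OF \<open>countable I\<close> \<open>infinite I\<close>]
  have **: "\<And>f. (\<And>i. 0 \<le> f i) \<Longrightarrow> (\<integral>\<^sup>+i. f i \<partial>count_space I) = (\<Sum>n. f (from_nat_into I n))"
    by (simp add: nn_integral_bij_count_space[symmetric, OF *] nn_integral_count_space_nat)
  show ?thesis
    by (simp add: ** from_nat_into)
qed

lemma hsq_tonelli:
  fixes g :: "int^'d \<Rightarrow> real \<Rightarrow> ennreal"
  assumes gm: "\<And>n. g n \<in> borel_measurable lborel"
  shows "hsq Cl s (\<lambda>n. \<integral>\<^sup>+ y. g n y \<partial>lborel) = (\<integral>\<^sup>+ y. hsq Cl s (\<lambda>n. g n y) \<partial>lborel)"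
proof -
  have m: "(\<lambda>y. \<integral>\<^sup>+ n. g n y \<partial>count_space (Cl \<alpha>)) \<in> borel_measurable lborel" for \<alpha>
    by (rule meas_cs[OF countable_cl]) (use gm in auto)
  have "(\<integral>\<^sup>+ y. hsq Cl s (\<lambda>n. g n y) \<partial>lborel)
      = (\<Sum>\<alpha>. \<integral>\<^sup>+ y. ennreal (Kc Cl \<alpha> powr (2 * s)) * (\<integral>\<^sup>+ n. g n y \<partial>count_space (Cl \<alpha>)) \<partial>lborel)"
    unfolding hsq_def by (rule nn_integral_suminf) (use m in auto)
  also have "\<dots> = (\<Sum>\<alpha>. ennreal (Kc Cl \<alpha> powr (2 * s)) * (\<integral>\<^sup>+ y. (\<integral>\<^sup>+ n. g n y \<partial>count_space (Cl \<alpha>)) \<partial>lborel))"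
    by (subst nn_integral_cmult) (use m in auto)
  also have "\<dots> = hsq Cl s (\<lambda>n. \<integral>\<^sup>+ y. g n y \<partial>lborel)"
    unfolding hsq_def by (subst nn_integral_count_space_nn_integral[OF countable_cl]) (use gm in auto)
  finally show ?thesis ..
qed



lemma mode_bound:
  fixes G :: "real \<Rightarrow> complex" and t x :: real
  assumes t: "t > 0" and Gm: "G \<in> borel_measurable lborel"
    and gi: "integrable lborel (\<lambda>y. (y * cmod (G y))\<^sup>2)"
  shows "(cmod (schr t G x))\<^sup>2 \<le> 2 * pi / t * (cmod (fourierN G (x / (2 * t))))\<^sup>2
           + 8 * t powr (-3/2) * (\<integral>y. (y * cmod (G y))\<^sup>2 \<partial>lborel)"
proof -
  define J where "J = (\<integral>y. (y * cmod (G y))\<^sup>2 \<partial>lborel)"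
  have J0: "J \<ge> 0" unfolding J_def by (rule integral_nonneg_AE) auto
  define Lc where "Lc = cis (x\<^sup>2 / (4 * t)) / csqrt (4 * \<i> * complex_of_real pi * complex_of_real t) * fourier G (x / (2 * t))"
  define E where "E = 2 * t powr (- 3 / 4) * sqrt J"
  have p1: "cmod (schr t G x - Lc) \<le> E" unfolding Lc_def E_def J_def by (rule part1[OF t Gm gi])
  define V where "V = cmod (fourierN G (x / (2 * t)))"
  have fe: "fourier G (x / (2 * t)) = complex_of_real (2 * pi) * fourierN G (x / (2 * t))"
    by (simp add: fourierN_def)
  have L: "cmod Lc = 2 * pi * V / sqrt (4 * pi * t)"
    using t unfolding Lc_def V_def fe by (simp add: norm_mult norm_divide)
  have L2: "(cmod Lc)\<^sup>2 = pi / t * V\<^sup>2"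
    using t unfolding L by (simp add: power_divide power_mult_distrib power2_eq_square)
  have E2: "E\<^sup>2 = 4 * t powr (-3/2) * J"
  proof -
    have "(t powr (-3/4))\<^sup>2 = t powr (-3/2)" by (simp add: power2_eq_square powr_add[symmetric])
    thus ?thesis using J0 by (simp add: E_def power_mult_distrib)
  qed
  have E0: "E \<ge> 0" using J0 by (simp add: E_def)
  have "cmod (schr t G x) \<le> cmod Lc + cmod (schr t G x - Lc)" by (rule norm_triangle_sub)
  hence a: "cmod (schr t G x) \<le> cmod Lc + E" using p1 by simp
  have "(cmod (schr t G x))\<^sup>2 \<le> (cmod Lc + E)\<^sup>2"
    using a by (intro power_mono) auto
  also have "\<dots> \<le> 2 * (cmod Lc)\<^sup>2 + 2 * E\<^sup>2"
    using sum_squares_ge_zero[of "cmod Lc - E" 0] by (simp add: power2_eq_square algebra_simps)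
  also have "\<dots> = 2 * pi / t * V\<^sup>2 + 8 * t powr (-3/2) * J" unfolding L2 E2 by simp
  finally show ?thesis unfolding V_def J_def .
qed



lemma mode_bound_enn:
  fixes G :: "real \<Rightarrow> complex" and t x :: real
  assumes t: "t > 0" and Gm: "G \<in> borel_measurable lborel"
  shows "ennreal ((cmod (schr t G x))\<^sup>2) \<le> ennreal (2 * pi / t) * ennreal ((cmod (fourierN G (x / (2 * t))))\<^sup>2)
           + ennreal (8 * t powr (-3/2)) * (\<integral>\<^sup>+y. ennreal ((cmod (complex_of_real y * G y))\<^sup>2) \<partial>lborel)"
proof -
  have eqg: "(\<lambda>y. ennreal ((cmod (complex_of_real y * G y))\<^sup>2)) = (\<lambda>y. ennreal ((y * cmod (G y))\<^sup>2))"
    by (simp add: norm_mult power_mult_distrib)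
  have gm: "(\<lambda>y. (y * cmod (G y))\<^sup>2) \<in> borel_measurable lborel" using Gm by measurable
  show ?thesis
  proof (cases "integrable lborel (\<lambda>y. (y * cmod (G y))\<^sup>2)")
    case True
    have nn: "(\<integral>\<^sup>+y. ennreal ((y * cmod (G y))\<^sup>2) \<partial>lborel) = ennreal (\<integral>y. (y * cmod (G y))\<^sup>2 \<partial>lborel)"
      by (rule nn_integral_eq_integral[OF True]) auto
    have J0: "(\<integral>y. (y * cmod (G y))\<^sup>2 \<partial>lborel) \<ge> 0" by (rule integral_nonneg_AE) auto
    have mb: "(cmod (schr t G x))\<^sup>2 \<le> 2 * pi / t * (cmod (fourierN G (x / (2 * t))))\<^sup>2
           + 8 * t powr (-3/2) * (\<integral>y. (y * cmod (G y))\<^sup>2 \<partial>lborel)"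
      by (rule mode_bound[OF t Gm True])
    have "ennreal ((cmod (schr t G x))\<^sup>2) \<le> ennreal (2 * pi / t * (cmod (fourierN G (x / (2 * t))))\<^sup>2
           + 8 * t powr (-3/2) * (\<integral>y. (y * cmod (G y))\<^sup>2 \<partial>lborel))"
      using mb by (rule ennreal_leI)
    also have "\<dots> = ennreal (2 * pi / t) * ennreal ((cmod (fourierN G (x / (2 * t))))\<^sup>2)
           + ennreal (8 * t powr (-3/2)) * ennreal (\<integral>y. (y * cmod (G y))\<^sup>2 \<partial>lborel)"
      using t J0 by (simp add: ennreal_plus[symmetric] ennreal_mult[symmetric] del: ennreal_plus)
    finally show ?thesis unfolding eqg nn .
  next
    case False
    have "(\<integral>\<^sup>+y. ennreal ((y * cmod (G y))\<^sup>2) \<partial>lborel) = \<infinity>"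
    proof (rule ccontr)
      assume "(\<integral>\<^sup>+y. ennreal ((y * cmod (G y))\<^sup>2) \<partial>lborel) \<noteq> \<infinity>"
      hence "integrable lborel (\<lambda>y. (y * cmod (G y))\<^sup>2)"
        by (intro integrableI_nonneg gm) (auto simp: top.not_eq_extremum)
      thus False using False by simp
    qed
    moreover have "ennreal (8 * t powr (-3/2)) \<noteq> 0" using t by simp
    ultimately show ?thesis unfolding eqg by simp
  qed
qed

lemma part2:
  fixes A :: "real^'d^'d" and Cl :: "nat \<Rightarrow> (int^'d) set" and s \<sigma> t :: real
    and G :: "real \<Rightarrow> int^'d \<Rightarrow> complex"
  assumes t: "t \<ge> 1"
  shows "ennreal (t powr (1 / 2)) * Linf_hs Cl s (evol A t G)
          \<le> ennreal 3 * (Z_norm Cl s G + ennreal (t powr (- 1 / 4)) * S_norm Cl s \<sigma> G)"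
proof (cases "admissible G")
  case False
  have "ennreal (t powr (- 1 / 4)) \<noteq> 0" using t by simp
  thus ?thesis using False by (simp add: S_norm_def)
next
  case True
  have tp: "t > 0" using t by simp
  have Gm: "(\<lambda>y. G y n) \<in> borel_measurable lborel" for n
  proof -
    have "integrable lborel (\<lambda>y. G y n)" using True unfolding admissible_def by blast
    thus ?thesis by (rule borel_measurable_integrable)
  qed
  define Z where "Z = Z_norm Cl s G"
  define W where "W = L2hs Cl s (\<lambda>x n. complex_of_real x * G x n)"
  define g where "g = (\<lambda>n y. ennreal ((cmod (complex_of_real y * G y n))\<^sup>2))"
  have gm: "g n \<in> borel_measurable lborel" for n unfolding g_def using Gm[of n] by measurable
  define HJ where "HJ = (\<integral>\<^sup>+ y. hs_sq Cl s (\<lambda>n. complex_of_real y * G y n) \<partial>lborel)"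
  have HJ: "HJ = hsq Cl s (\<lambda>n. \<integral>\<^sup>+ y. g n y \<partial>lborel)"
    unfolding HJ_def hs_sq_hsq using hsq_tonelli[OF gm, of Cl s] unfolding g_def by simp
  have W2: "W\<^sup>2 = HJ" unfolding W_def L2hs_def HJ_def esqrt_sq ..
  define a where "a = sqrt (2 * pi / t)"
  define b where "b = sqrt 8 * t powr (-3/4)"
  have a0: "a \<ge> 0" and b0: "b \<ge> 0" using tp by (auto simp: a_def b_def)
  have pt: "hs_norm Cl s (evol A t G x) \<le> ennreal a * Z + ennreal b * W" for x
  proof -
    define v where "v = (\<lambda>n. fourierN (\<lambda>y. G y n) (x / (2 * t)))"
    have vZ: "hs_norm Cl s v \<le> Z" unfolding Z_def Z_norm_def v_def by (rule SUP_upper) simp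
    have "hs_sq Cl s (evol A t G x) \<le> hsq Cl s (\<lambda>n. ennreal (2 * pi / t) * ennreal ((cmod (v n))\<^sup>2)
           + ennreal (8 * t powr (-3/2)) * (\<integral>\<^sup>+ y. g n y \<partial>lborel))"
      unfolding hs_sq_hsq
    proof (rule hsq_mono)
      fix n
      have "cmod (evol A t G x n) = cmod (schr t (\<lambda>y. G y n) x)" by (simp add: evol_def norm_mult)
      thus "ennreal ((cmod (evol A t G x n))\<^sup>2) \<le> ennreal (2 * pi / t) * ennreal ((cmod (v n))\<^sup>2)
           + ennreal (8 * t powr (-3/2)) * (\<integral>\<^sup>+ y. g n y \<partial>lborel)"
        using mode_bound_enn[OF tp Gm[of n], of x] by (simp add: v_def g_def)
    qed
    also have "\<dots> = ennreal (2 * pi / t) * hs_sq Cl s v + ennreal (8 * t powr (-3/2)) * HJ"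
      unfolding hsq_lin HJ hs_sq_hsq ..
    also have "\<dots> \<le> ennreal (a\<^sup>2) * Z\<^sup>2 + ennreal (b\<^sup>2) * W\<^sup>2"
    proof -
      have "hs_sq Cl s v \<le> Z\<^sup>2"
        using vZ unfolding hs_norm_def by (metis esqrt_sq power_mono zero_le)
      moreover have "a\<^sup>2 = 2 * pi / t" using tp by (simp add: a_def)
      moreover have "b\<^sup>2 = 8 * t powr (-3/2)"
      proof -
        have "(t powr (-3/4))\<^sup>2 = t powr (-3/2)" by (simp add: power2_eq_square powr_add[symmetric])
        thus ?thesis by (simp add: b_def power_mult_distrib)
      qed
      ultimately show ?thesis unfolding W2 by (simp add: mult_left_mono)
    qed
    also have "\<dots> \<le> (ennreal a * Z + ennreal b * W)\<^sup>2"
      using a0 b0 by (simp add: power2_sum power_mult_distrib ennreal_power)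
    finally show ?thesis unfolding hs_norm_def by (rule esqrt_le)
  qed
  have "ennreal (t powr (1 / 2)) * Linf_hs Cl s (evol A t G)
        = (SUP x. ennreal (t powr (1 / 2)) * hs_norm Cl s (evol A t G x))"
    unfolding Linf_hs_def by (rule SUP_mult_left_ennreal)
  also have "\<dots> \<le> ennreal 3 * (Z + ennreal (t powr (- 1 / 4)) * S_norm Cl s \<sigma> G)"
  proof (rule SUP_least)
    fix x
    have "ennreal (t powr (1 / 2)) * hs_norm Cl s (evol A t G x)
          \<le> ennreal (t powr (1 / 2)) * (ennreal a * Z + ennreal b * W)"
      by (rule mult_left_mono[OF pt]) simp
    also have "\<dots> = ennreal (t powr (1 / 2) * a) * Z + ennreal (t powr (1 / 2) * b) * W"
      using a0 b0 by (simp add: distrib_left ennreal_mult mult.assoc)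
    also have "\<dots> \<le> ennreal 3 * Z + ennreal (3 * t powr (- 1 / 4)) * W"
    proof (intro add_mono mult_right_mono ennreal_leI)
      have "t powr (1 / 2) * a = sqrt (2 * pi)"
        using tp by (simp add: a_def powr_half_sqrt real_sqrt_mult[symmetric])
      also have "\<dots> \<le> sqrt 9" using pi_less_4 by (intro real_sqrt_le_mono) simp
      finally show "t powr (1 / 2) * a \<le> 3" by simp
      have "t powr (1 / 2) * t powr (-3/4) = t powr (- 1 / 4)" by (simp add: powr_add[symmetric])
      moreover have "sqrt 8 \<le> (3::real)" using real_sqrt_le_mono[of 8 9] by simp
      ultimately show "t powr (1 / 2) * b \<le> 3 * t powr (- 1 / 4)"
        unfolding b_def by (simp add: mult.left_commute mult_right_mono)
    qed auto
    also have "\<dots> \<le> ennreal 3 * (Z + ennreal (t powr (- 1 / 4)) * S_norm Cl s \<sigma> G)"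
    proof -
      have WS: "W \<le> S_norm Cl s \<sigma> G" using True by (simp add: S_norm_def W_def)
      have "ennreal (3 * t powr (- 1 / 4)) * W = ennreal 3 * (ennreal (t powr (- 1 / 4)) * W)"
        by (simp add: ennreal_mult mult.assoc)
      also have "\<dots> \<le> ennreal 3 * (ennreal (t powr (- 1 / 4)) * S_norm Cl s \<sigma> G)"
        by (intro mult_left_mono WS) auto
      finally show ?thesis by (simp add: distrib_left add_left_mono)
    qed
    finally show "ennreal (t powr (1 / 2)) * hs_norm Cl s (evol A t G x)
          \<le> ennreal 3 * (Z + ennreal (t powr (- 1 / 4)) * S_norm Cl s \<sigma> G)" .
  qed
  finally show ?thesis unfolding Z_def .
qed



lemma part3:
  fixes Cl :: "nat \<Rightarrow> (int^'d) set" and F :: "real \<Rightarrow> real \<Rightarrow> int^'d \<Rightarrow> complex"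
  assumes d: "0 < \<delta>" "\<delta> < 1/4" and T: "T \<ge> 1" and t: "t \<in> {1..T}"
  shows "Z_norm Cl s (F t) + ennreal (t powr (- 1 / 4)) * S_norm Cl s \<sigma> (F t)
             \<le> ennreal 2 * X_norm Cl s \<sigma> \<delta> T F"
proof -
  have t1: "t \<ge> 1" and tT: "t \<le> T" using t by auto
  have jb: "jbr t \<le> 2 * t"
  proof -
    have h: "1 \<le> t * t" using mult_mono[of 1 t 1 t] t1 by simp
    have "sqrt (1 + t\<^sup>2) \<le> sqrt ((2 * t)\<^sup>2)" using h
      by (intro real_sqrt_le_mono) (simp add: power2_eq_square algebra_simps)
    moreover have "sqrt ((2 * t)\<^sup>2) = 2 * t" using t1 by (intro real_sqrt_unique) auto
    ultimately show ?thesis by (simp only: jbr_def)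
  qed
  have jp: "jbr t > 0" by (simp add: jbr_def add_pos_nonneg)
  have "(2 * t) powr (-\<delta>) \<le> jbr t powr (-\<delta>)"
    by (rule powr_mono2') (use d jp jb in auto)
  moreover have "(2 * t) powr (-\<delta>) = 2 powr (-\<delta>) * t powr (-\<delta>)" using t1 by (simp add: powr_mult)
  moreover have "2 powr (-1) \<le> (2::real) powr (-\<delta>)" using d by (intro powr_mono) auto
  moreover have "t powr (- 1 / 4) \<le> t powr (-\<delta>)" using d t1 by (intro powr_mono) auto
  ultimately have key: "t powr (- 1 / 4) \<le> 2 * jbr t powr (-\<delta>)"
  proof -
    assume a1: "(2 * t) powr (-\<delta>) \<le> jbr t powr (-\<delta>)"
      and a2: "(2 * t) powr (-\<delta>) = 2 powr (-\<delta>) * t powr (-\<delta>)"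
      and a3: "2 powr (-1) \<le> (2::real) powr (-\<delta>)" and a4: "t powr (- 1 / 4) \<le> t powr (-\<delta>)"
    have "t powr (- 1 / 4) \<le> 2 * (2 powr (-1) * t powr (-\<delta>))" using a4 by (simp add: powr_minus)
    also have "\<dots> \<le> 2 * (2 powr (-\<delta>) * t powr (-\<delta>))" using a3 by (intro mult_left_mono mult_right_mono) auto
    also have "\<dots> \<le> 2 * jbr t powr (-\<delta>)" using a1 a2 by simp
    finally show ?thesis .
  qed
  define Z where "Z = Z_norm Cl s (F t)"
  define S where "S = S_norm Cl s \<sigma> (F t)"
  have "Z + ennreal (t powr (- 1 / 4)) * S \<le> Z + ennreal (2 * jbr t powr (-\<delta>)) * S"
    using key by (intro add_left_mono mult_right_mono ennreal_leI) auto
  also have "\<dots> \<le> ennreal 2 * (Z + ennreal (jbr t powr (-\<delta>)) * S)"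
  proof -
    have j0: "jbr t powr (-\<delta>) \<ge> 0" by simp
    have e1: "ennreal (2 * jbr t powr (-\<delta>)) * S = ennreal 2 * (ennreal (jbr t powr (-\<delta>)) * S)"
      using j0 by (simp add: ennreal_mult mult.assoc)
    have e2: "Z \<le> ennreal 2 * Z"
    proof -
      have "Z \<le> Z + Z" by simp
      also have "Z + Z = ennreal 2 * Z" by (simp add: mult_2)
      finally show ?thesis .
    qed
    show ?thesis unfolding e1 distrib_left by (rule add_right_mono[OF e2])
  qed
  also have "\<dots> \<le> ennreal 2 * X_norm Cl s \<sigma> \<delta> T F"
  proof (rule mult_left_mono)
    have "Z + ennreal (jbr t powr (-\<delta>)) * S
        \<le> Z_norm Cl s (F t) + ennreal (jbr t powr (- \<delta>)) * S_norm Cl s \<sigma> (F t)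
          + ennreal (jbr t powr (1 - \<delta>)) * dt_S_norm Cl s \<sigma> T F t"
      unfolding Z_def S_def by simp
    also have "\<dots> \<le> X_norm Cl s \<sigma> \<delta> T F" unfolding X_norm_def
      by (rule SUP_upper) (use t1 tT in auto)
    finally show "Z + ennreal (jbr t powr (-\<delta>)) * S \<le> X_norm Cl s \<sigma> \<delta> T F" .
  qed simp
  finally show ?thesis unfolding Z_def S_def .
qed


theorem lemma2p11:
  fixes A :: "real^'d^'d" and Cl :: "nat \<Rightarrow> (int^'d) set" and s \<sigma> :: real
  assumes symA: "transpose A = A"
    and posA: "\<forall>v::real^'d. v \<noteq> 0 \<longrightarrow> v \<bullet> (A *v v) > 0"
    and clusters: "cluster_partition Cl"
    and s_gt: "s > real CARD('d) / 2"
    and sigma_pos: "\<sigma> > 0"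
  shows
   "(\<exists>C>0. \<forall>(f::real \<Rightarrow> complex) (t::real).
        f \<in> borel_measurable lborel \<and> integrable lborel (\<lambda>x. (cmod (f x))\<^sup>2) \<and>
        integrable lborel (\<lambda>x. (x * cmod (f x))\<^sup>2) \<and> t > 0 \<longrightarrow>
        (\<forall>x. cmod (schr t f x - cis (x\<^sup>2 / (4 * t)) / csqrt (4 * \<i> * complex_of_real pi * complex_of_real t)
                        * fourier f (x / (2 * t)))
             \<le> C * t powr (- 3 / 4) * sqrt (\<integral>y. (y * cmod (f y))\<^sup>2 \<partial>lborel)))
    \<and> (\<exists>C>0. \<forall>T\<ge>1. \<forall>t\<in>{1..T}. \<forall>F :: real \<Rightarrow> real \<Rightarrow> int^'d \<Rightarrow> complex.
        ennreal (t powr (1 / 2)) * Linf_hs Cl s (evol A t (F t))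
          \<le> ennreal C * (Z_norm Cl s (F t) + ennreal (t powr (- 1 / 4)) * S_norm Cl s \<sigma> (F t)))
    \<and> (\<exists>\<delta>0>0. \<forall>\<delta>. 0 < \<delta> \<and> \<delta> < \<delta>0 \<longrightarrow>
        (\<exists>C>0. \<forall>T\<ge>1. \<forall>t\<in>{1..T}. \<forall>F :: real \<Rightarrow> real \<Rightarrow> int^'d \<Rightarrow> complex.
           Z_norm Cl s (F t) + ennreal (t powr (- 1 / 4)) * S_norm Cl s \<sigma> (F t)
             \<le> ennreal C * X_norm Cl s \<sigma> \<delta> T F))"
  proof (intro conjI)
  show "\<exists>C>0. \<forall>(f::real \<Rightarrow> complex) (t::real).
        f \<in> borel_measurable lborel \<and> integrable lborel (\<lambda>x. (cmod (f x))\<^sup>2) \<and>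
        integrable lborel (\<lambda>x. (x * cmod (f x))\<^sup>2) \<and> t > 0 \<longrightarrow>
        (\<forall>x. cmod (schr t f x - cis (x\<^sup>2 / (4 * t)) / csqrt (4 * \<i> * complex_of_real pi * complex_of_real t)
                        * fourier f (x / (2 * t)))
             \<le> C * t powr (- 3 / 4) * sqrt (\<integral>y. (y * cmod (f y))\<^sup>2 \<partial>lborel))"
    apply (rule exI[of _ 2])
    apply (intro conjI allI impI)
     apply simp
    apply (rule part1)
      apply auto
    done
  show "\<exists>C>0. \<forall>T\<ge>1. \<forall>t\<in>{1..T}. \<forall>F :: real \<Rightarrow> real \<Rightarrow> int^'d \<Rightarrow> complex.
        ennreal (t powr (1 / 2)) * Linf_hs Cl s (evol A t (F t))
          \<le> ennreal C * (Z_norm Cl s (F t) + ennreal (t powr (- 1 / 4)) * S_norm Cl s \<sigma> (F t))"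
    apply (rule exI[of _ 3])
    apply (intro conjI allI impI ballI)
     apply simp
    apply (rule part2)
    apply auto
    done
  show "\<exists>\<delta>0>0. \<forall>\<delta>. 0 < \<delta> \<and> \<delta> < \<delta>0 \<longrightarrow>
        (\<exists>C>0. \<forall>T\<ge>1. \<forall>t\<in>{1..T}. \<forall>F :: real \<Rightarrow> real \<Rightarrow> int^'d \<Rightarrow> complex.
           Z_norm Cl s (F t) + ennreal (t powr (- 1 / 4)) * S_norm Cl s \<sigma> (F t)
             \<le> ennreal C * X_norm Cl s \<sigma> \<delta> T F)"
  proof (rule exI[of _ "1/4"], intro conjI allI impI)
    fix \<delta> :: real assume d: "0 < \<delta> \<and> \<delta> < 1/4"
    show "\<exists>C>0. \<forall>T\<ge>1. \<forall>t\<in>{1..T}. \<forall>F :: real \<Rightarrow> real \<Rightarrow> int^'d \<Rightarrow> complex.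
           Z_norm Cl s (F t) + ennreal (t powr (- 1 / 4)) * S_norm Cl s \<sigma> (F t)
             \<le> ennreal C * X_norm Cl s \<sigma> \<delta> T F"
      apply (rule exI[of _ 2])
      apply (intro conjI allI impI ballI)
       apply simp
      apply (rule part3)
      using d apply auto
      done
  qed simp
qed

end
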